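(* Let $E_1, E_2, \ldots$ be i.i.d.\ exponential random variables with mean $1$, and $Z_k = E_1 + \cdots + E_k$. Let $\Psi(x) = 2^{\{\log_2 x\}}$ for $x > 0$. Let $r \geq 0$ be an integer and $\gamma > 0$. Then the series \[ Y_{r,\gamma} = \sum_{k=r+1}^\infty \left( \frac{\Psi(Z_k/\gamma)}{Z_k} - \frac{\Psi(k/\gamma)}{k}\right) \] converges absolutely with probability $1$, and its sum belongs to $L_p$ for every $1 \leq p < r+1$.
   Context: $\{y\}$ denotes the fractional part of $y$, so $\Psi$ increases linearly from $1$ to $2$ on each interval $[2^j, 2^{j+1})$, $j \in \mathbb{Z}$. *)

theory Defs
  imports "HOL-Probability.Probability"
begin

definition Psi :: "real \<Rightarrow> real" where
  "Psi x = 2 powr frac (log 2 x)"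

end

theory Submission
  imports Defs "HOL-Analysis.Analysis"
begin

lemma Psi_div: assumes "x > 0" shows "Psi x / x = 2 powr (- of_int \<lfloor>log 2 x\<rfloor>)"
proof -
  have "x = 2 powr (log 2 x)" using assms by simp
  hence "Psi x / x = 2 powr frac (log 2 x) / 2 powr (log 2 x)" unfolding Psi_def by simp
  also have "\<dots> = 2 powr (frac (log 2 x) - log 2 x)" by (simp add: powr_diff)
  also have "frac (log 2 x) - log 2 x = - of_int \<lfloor>log 2 x\<rfloor>" by (simp add: frac_def)
  finally show ?thesis .
qed

lemma Psi_bounds: "0 \<le> Psi x" "Psi x \<le> 2"
proof -
  show "0 \<le> Psi x" unfolding Psi_def by simp
  have "frac (log 2 x) < 1" by (rule frac_lt_1)
  hence "2 powr frac (log 2 x) \<le> 2 powr 1" by (intro powr_mono) auto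
  thus "Psi x \<le> 2" unfolding Psi_def by simp
qed

lemma floor_sep:
  fixes x y :: real
  assumes "0 < x" "x < y" "\<lfloor>log 2 x\<rfloor> \<noteq> \<lfloor>log 2 y\<rfloor>"
  shows "\<exists>j::int. x < 2 powr j \<and> 2 powr j \<le> y"
proof (intro exI conjI)
  have ly: "log 2 x \<le> log 2 y" using assms by simp
  hence "\<lfloor>log 2 x\<rfloor> \<le> \<lfloor>log 2 y\<rfloor>" by (rule floor_mono)
  hence lt: "\<lfloor>log 2 x\<rfloor> < \<lfloor>log 2 y\<rfloor>" using assms(3) by simp
  have "log 2 x < of_int \<lfloor>log 2 y\<rfloor>"
    using lt floor_less_iff by blast
  hence "2 powr (log 2 x) < 2 powr (of_int \<lfloor>log 2 y\<rfloor>)" by simp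
  thus "x < 2 powr (of_int \<lfloor>log 2 y\<rfloor>)" using assms by simp
  have "2 powr (of_int \<lfloor>log 2 y\<rfloor>) \<le> 2 powr (log 2 y)" by (intro powr_mono) auto
  thus "2 powr (of_int \<lfloor>log 2 y\<rfloor>) \<le> y" using assms by simp
qed

lemma term_bound:
  fixes z \<gamma> :: real and k :: nat
  assumes "z > 0" "k \<ge> 1" "\<gamma> > 0"
  shows "\<bar>Psi (z / \<gamma>) / z - Psi (real k / \<gamma>) / real k\<bar> \<le> 2 / min z (real k)"
proof -
  have k: "real k > 0" using assms by simp
  have a: "0 \<le> Psi (z / \<gamma>) / z" "Psi (z / \<gamma>) / z \<le> 2 / z"
    using Psi_bounds[of "z/\<gamma>"] assms by (auto simp: divide_right_mono)
  have b: "0 \<le> Psi (real k / \<gamma>) / real k" "Psi (real k / \<gamma>) / real k \<le> 2 / real k"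
    using Psi_bounds[of "real k/\<gamma>"] k by (auto simp: divide_right_mono)
  have "2 / z \<le> 2 / min z (real k)" "2 / real k \<le> 2 / min z (real k)"
    using assms k by (auto simp: frac_le min_def)
  thus ?thesis using a b by linarith
qed

lemma term_zero:
  fixes z \<gamma> :: real and k :: nat
  assumes "z > 0" "k \<ge> 1" "\<gamma> > 0"
    and "\<bar>Psi (z / \<gamma>) / z - Psi (real k / \<gamma>) / real k\<bar> \<noteq> 0"
  shows "\<exists>j::int. min z (real k) < \<gamma> * 2 powr j \<and> \<gamma> * 2 powr j \<le> max z (real k)"
proof -
  have k: "real k > 0" using assms by simp
  have eq: "Psi (x / \<gamma>) / x = 2 powr (- of_int \<lfloor>log 2 (x/\<gamma>)\<rfloor>) / \<gamma>" if "x > 0" for x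
  proof -
    have "Psi (x / \<gamma>) / x = (Psi (x / \<gamma>) / (x / \<gamma>)) / \<gamma>" using that assms by (simp add: field_simps)
    thus ?thesis using Psi_div[of "x/\<gamma>"] that assms by (simp add: field_simps)
  qed
  have ne: "\<lfloor>log 2 (z/\<gamma>)\<rfloor> \<noteq> \<lfloor>log 2 (real k/\<gamma>)\<rfloor>"
    using assms(4) eq[of z] eq[of "real k"] assms k by auto
  have "\<exists>j::int. min (z/\<gamma>) (real k/\<gamma>) < 2 powr j \<and> 2 powr j \<le> max (z/\<gamma>) (real k/\<gamma>)"
  proof (cases "z < real k")
    case True
    hence "z/\<gamma> < real k/\<gamma>" using assms by (simp add: divide_strict_right_mono)
    from floor_sep[OF _ this ne] assms True show ?thesis by (auto simp: min_def max_def)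
  next
    case False
    hence lt: "real k/\<gamma> < z/\<gamma>" using ne by (cases "z = real k") (auto simp: divide_strict_right_mono assms)
    from floor_sep[OF _ this] ne k assms False lt show ?thesis by (auto simp: min_def max_def)
  qed
  then obtain j :: int where j: "min (z/\<gamma>) (real k/\<gamma>) < 2 powr j" "2 powr j \<le> max (z/\<gamma>) (real k/\<gamma>)" by blast
  have "min (z/\<gamma>) (real k/\<gamma>) = min z (real k) / \<gamma>" "max (z/\<gamma>) (real k/\<gamma>) = max z (real k) / \<gamma>"
    using assms by (auto simp: min_def max_def divide_le_cancel)
  with j assms show ?thesis by (intro exI[of _ j]) (auto simp: field_simps)
qed

lemma tele_aux:
  fixes y :: real assumes "y > 0"
  shows "(\<Sum>t<Suc n. 1 / (y + t)^2) \<le> 1/y^2 + 1/y - 1/(y + n)"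
proof (induction n)
  case 0 then show ?case by simp
next
  case (Suc n)
  have yn: "y + n > 0" using assms by simp
  have "1 / (y + Suc n)^2 \<le> 1/(y+n) - 1/(y + Suc n)"
  proof -
    have "1/(y+n) - 1/(y + Suc n) = 1 / ((y+n)*(y+Suc n))" using yn by (simp add: field_simps)
    also have "1 / (y + Suc n)^2 \<le> \<dots>" using yn
      by (intro divide_left_mono) (auto simp: power2_eq_square intro!: mult_right_mono)
    finally show ?thesis .
  qed
  with Suc show ?case by simp
qed

lemma tele:
  fixes y :: real assumes "y > 0"
  shows "(\<Sum>t<n. 1 / (y + real t)^2) \<le> 1/y^2 + 1/y"
proof (cases n)
  case 0 then show ?thesis using assms by simp
next
  case (Suc m)
  have "1/(y+m) > 0" using assms by simp
  thus ?thesis using tele_aux[OF assms, of m] unfolding Suc by linarith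
qed

lemma sq_le2: fixes x s :: real assumes "s > 0"
  shows "1 / (x^2 + s^2) \<le> 2 / (\<bar>x\<bar> + s)^2"
proof -
  have "(\<bar>x\<bar> + s)^2 \<le> 2 * (x^2 + s^2)"
    using sum_squares_ge_zero[of "\<bar>x\<bar> - s" 0] by (simp add: power2_eq_square algebra_simps)
  moreover have "(\<bar>x\<bar> + s)^2 > 0" using assms by simp
  moreover have "x^2 + s^2 > 0" using assms by (simp add: add_nonneg_pos)
  ultimately have A: "2 / (2 * (x^2 + s^2)) \<le> 2 / (\<bar>x\<bar> + s)^2"
    by (intro divide_left_mono mult_pos_pos) auto
  have B: "2 / (2 * (x^2 + s^2)) = 1 / (x^2 + s^2)" by (simp only: divide_divide_eq_left[symmetric])
  show ?thesis using A unfolding B .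
qed

lemma sum_inv_sq:
  fixes b c :: real assumes c: "c > 0"
  shows "(\<Sum>k<N. 1 / ((real k - b)^2 + c)) \<le> 4 * (1/c + 1/sqrt c)"
proof -
  define s where "s = sqrt c"
  have s: "s > 0" "s^2 = c" using c by (auto simp: s_def)
  define f where "f k = 1 / ((real k - b)^2 + c)" for k
  have fle: "f k \<le> 2 / (\<bar>real k - b\<bar> + s)^2" for k
    unfolding f_def using sq_le2[OF s(1), of "real k - b"] s by simp
  have f0: "f k \<ge> 0" for k unfolding f_def using c by simp
  define m where "m = nat \<lceil>b\<rceil>"
  have "(\<Sum>k<N. f k) \<le> (\<Sum>k<m + N. f k)"
    by (rule sum_mono2) (auto simp: f0)
  also have "\<dots> = (\<Sum>k<m. f k) + (\<Sum>k=m..<m+N. f k)"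
    by (simp add: atLeast0LessThan[symmetric] sum.atLeastLessThan_concat)
  also have "(\<Sum>k=m..<m+N. f k) = (\<Sum>t<N. f (m + t))"
    using sum.shift_bounds_nat_ivl[of f 0 m N] by (simp add: add.commute atLeast0LessThan)
  also have "\<dots> \<le> (\<Sum>t<N. 2 / ((real m - b + s) + t)^2)"
  proof (rule sum_mono)
    fix t assume "t \<in> {..<N}"
    have "real m \<ge> b" unfolding m_def by linarith
    hence eq: "\<bar>real (m + t) - b\<bar> + s = (real m - b + s) + t" by simp
    show "f (m + t) \<le> 2 / ((real m - b + s) + t)^2" using fle[of "m+t", unfolded eq] .
  qed
  also have "\<dots> = 2 * (\<Sum>t<N. 1 / ((real m - b + s) + t)^2)" by (simp add: sum_distrib_left)
  also have "\<dots> \<le> 2 * (1/(real m - b + s)^2 + 1/(real m - b + s))"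
  proof -
    have "real m \<ge> b" unfolding m_def by linarith
    hence "real m - b + s > 0" using s by simp
    from tele[OF this, of N] show ?thesis by simp
  qed
  also have "\<dots> \<le> 2 * (1/c + 1/s)"
  proof -
    have "real m \<ge> b" unfolding m_def by linarith
    hence y: "real m - b + s \<ge> s" by simp
    have "1/(real m - b + s)^2 \<le> 1/s^2" using y s by (intro divide_left_mono power_mono) auto
    moreover have "1/(real m - b + s) \<le> 1/s" using y s by (intro divide_left_mono) auto
    ultimately show ?thesis using s by simp
  qed
  also have "(\<Sum>k<m. f k) = (\<Sum>t<m. f (m - Suc t))"
    by (rule sum.nat_diff_reindex[symmetric])
  also have "\<dots> \<le> (\<Sum>t<m. 2 / ((b - real m + 1 + s) + t)^2)"
  proof (rule sum_mono)
    fix t assume "t \<in> {..<m}"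
    hence tm: "t < m" by simp
    have "real m < b + 1" unfolding m_def using tm by (simp add: m_def) linarith
    have eq: "\<bar>real (m - Suc t) - b\<bar> + s = (b - real m + 1 + s) + t"
      using tm \<open>real m < b + 1\<close> by (simp add: of_nat_diff)
    show "f (m - Suc t) \<le> 2 / ((b - real m + 1 + s) + t)^2" using fle[of "m - Suc t", unfolded eq] .
  qed
  also have "\<dots> = 2 * (\<Sum>t<m. 1 / ((b - real m + 1 + s) + t)^2)" by (simp add: sum_distrib_left)
  also have "\<dots> \<le> 2 * (1/c + 1/s)"
  proof (cases "m = 0")
    case True then show ?thesis using s c by simp
  next
    case False
    have "real m < b + 1" unfolding m_def using False by (simp add: m_def) linarith
    hence y: "b - real m + 1 + s \<ge> s" "b - real m + 1 + s > 0" using s by auto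
    have "(\<Sum>t<m. 1 / ((b - real m + 1 + s) + t)^2) \<le> 1/(b - real m + 1 + s)^2 + 1/(b - real m + 1 + s)"
      by (rule tele[OF y(2)])
    also have "\<dots> \<le> 1/s^2 + 1/s"
      using y s by (intro add_mono divide_left_mono power_mono) auto
    finally show ?thesis using s by simp
  qed
  finally have "(\<Sum>k<N. f k) \<le> 4 * (1/c + 1/s)" by simp
  thus ?thesis unfolding f_def s_def .
qed

lemma pow_aux:
  fixes b :: real assumes b: "b > 0"
  shows "(2*b) powr (1/4) / sqrt (b/2) \<le> 2 * b powr (-1/4)"
proof -
  have "sqrt (b/2) = b powr (1/2) / 2 powr (1/2)" using b by (simp add: powr_half_sqrt powr_divide real_sqrt_divide)
  hence "(2*b) powr (1/4) / sqrt (b/2) = (2 powr (1/4) * 2 powr (1/2)) * (b powr (1/4) / b powr (1/2))"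
    using b by (simp add: powr_mult field_simps)
  also have "\<dots> = 2 powr (3/4) * b powr (-1/4)"
    using b by (simp add: powr_add[symmetric] powr_diff[symmetric])
  also have "\<dots> \<le> 2 * b powr (-1/4)"
  proof -
    have "2 powr (3/4) \<le> (2::real) powr 1" by (intro powr_mono) auto
    thus ?thesis by (intro mult_right_mono) auto
  qed
  finally show ?thesis .
qed

lemma ksum_bound:
  fixes b e :: real
  assumes b: "b \<ge> 1/2" and e: "0 \<le> e" "e \<le> 1/4"
  shows "(\<Sum>k<N. (if 1 \<le> k \<and> real k < 2*b then real k powr e / ((real k - b)^2 + real k) else 0))
           \<le> 120 * b powr (-1/4)"
proof -
  define c where "c = b/2"
  have c: "c > 0" "c \<ge> 1/4" using b by (auto simp: c_def)
  define A where "A = (2*b) powr (1/4) * 5"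
  have A: "A \<ge> 0" unfolding A_def by simp
  have trm: "(if 1 \<le> k \<and> real k < 2*b then real k powr e / ((real k - b)^2 + real k) else 0)
      \<le> A * (1 / ((real k - b)^2 + c))" for k
  proof (cases "1 \<le> k \<and> real k < 2*b")
    case False
    have "0 \<le> A * (1 / ((real k - b)^2 + c))" using A c by (simp add: add_nonneg_pos)
    thus ?thesis by (subst if_not_P[OF False])
  next
    case True
    hence k1: "real k \<ge> 1" and k2: "real k < 2*b" by auto
    have p1: "real k powr e \<le> (2*b) powr (1/4)"
    proof -
      have "real k powr e \<le> real k powr (1/4)" using k1 e by (intro powr_mono) auto
      also have "\<dots> \<le> (2*b) powr (1/4)" using k1 k2 by (intro powr_mono2) auto
      finally show ?thesis .
    qed
    have p2: "1 / ((real k - b)^2 + real k) \<le> 5 / ((real k - b)^2 + c)"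
    proof (cases "real k \<ge> c")
      case True
      have "1 / ((real k - b)^2 + real k) \<le> 1 / ((real k - b)^2 + c)"
        using True c by (intro divide_left_mono add_mono mult_pos_pos add_nonneg_pos) auto
      also have "\<dots> \<le> 5 / ((real k - b)^2 + c)"
        using c by (intro divide_right_mono) auto
      finally show ?thesis .
    next
      case False
      hence "b - real k \<ge> b/2" unfolding c_def by simp
      hence "(b - real k)^2 \<ge> (b/2)^2" using b by (intro power_mono) auto
      moreover have "(b/2)^2 \<ge> c / 4" using b unfolding c_def by (simp add: power2_eq_square field_simps)
      ultimately have h: "(real k - b)^2 \<ge> c/4" by (simp add: power2_commute)
      have "(real k - b)^2 + c \<le> 5 * ((real k - b)^2 + real k)" using h k1 by simp
      hence "1 / ((real k - b)^2 + real k) \<le> 5 / ((real k - b)^2 + c)"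
        using c k1 by (simp add: field_simps add_pos_nonneg)
      thus ?thesis .
    qed
    have "real k powr e / ((real k - b)^2 + real k) = real k powr e * (1 / ((real k - b)^2 + real k))" by simp
    also have "\<dots> \<le> (2*b) powr (1/4) * (5 / ((real k - b)^2 + c))"
      using p1 p2 k1 by (intro mult_mono) (auto simp: add_nonneg_pos)
    finally show ?thesis using True unfolding A_def by simp
  qed
  have "(\<Sum>k<N. (if 1 \<le> k \<and> real k < 2*b then real k powr e / ((real k - b)^2 + real k) else 0))
         \<le> (\<Sum>k<N. A * (1 / ((real k - b)^2 + c)))" by (rule sum_mono) (rule trm)
  also have "\<dots> = A * (\<Sum>k<N. 1 / ((real k - b)^2 + c))" by (simp add: sum_distrib_left)
  also have "\<dots> \<le> A * (4 * (1/c + 1/sqrt c))" by (intro mult_left_mono sum_inv_sq c A)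
  also have "\<dots> \<le> A * (12 / sqrt c)"
  proof -
    have sc: "sqrt c \<ge> 1/2" using c real_sqrt_le_mono[of "1/4" c] by (simp add: real_sqrt_divide)
    have "1/c = (1/sqrt c) * (1/sqrt c)" using c by (simp add: field_simps)
    also have "\<dots> \<le> 2 * (1/sqrt c)" using sc c by (intro mult_right_mono) (auto simp: field_simps)
    finally show ?thesis using A by (intro mult_left_mono) auto
  qed
  also have "\<dots> = 60 * ((2*b) powr (1/4) / sqrt (b/2))" unfolding A_def c_def by simp
  also have "\<dots> \<le> 60 * (2 * b powr (-1/4))" using b by (intro mult_left_mono pow_aux) auto
  finally show ?thesis by simp
qed

lemma jensen_pos:
  fixes a w :: "nat \<Rightarrow> real" and S :: "nat set" and p :: real
  assumes S: "finite S" "S \<noteq> {}" and p: "p \<ge> 1"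
    and a: "\<And>n. n \<in> S \<Longrightarrow> a n > 0" and w: "\<And>n. n \<in> S \<Longrightarrow> w n > 0"
  shows "(\<Sum>n\<in>S. a n) powr p \<le> (\<Sum>n\<in>S. w n) powr (p-1) * (\<Sum>n\<in>S. w n powr (1-p) * a n powr p)"
proof -
  define W where "W = (\<Sum>n\<in>S. w n)"
  have W: "W > 0" unfolding W_def using S w by (intro sum_pos) auto
  define v where "v n = w n / W" for n
  define y where "y n = a n / w n" for n
  have sv: "(\<Sum>n\<in>S. v n) = 1" unfolding v_def W_def using W W_def by (simp add: sum_divide_distrib[symmetric])
  have "(\<Sum>n\<in>S. v n *\<^sub>R y n) powr p \<le> (\<Sum>n\<in>S. v n * y n powr p)"
    by (rule convex_on_sum[OF S powr_convex[OF p] sv])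
       (use W w a in \<open>auto simp: v_def y_def less_imp_le\<close>)
  moreover have "(\<Sum>n\<in>S. v n *\<^sub>R y n) = (\<Sum>n\<in>S. a n) / W"
    unfolding v_def y_def using w by (simp add: sum_divide_distrib) (intro sum.cong, auto, metis less_irrefl)
  moreover have "v n * y n powr p = (w n powr (1-p) * a n powr p) / W" if "n \<in> S" for n
  proof -
    have "v n * y n powr p = w n * (a n powr p / w n powr p) / W"
      unfolding v_def y_def using w[OF that] a[OF that] by (simp add: powr_divide)
    also have "w n * (a n powr p / w n powr p) = w n powr (1-p) * a n powr p"
      using w[OF that] by (simp add: powr_diff)
    finally show ?thesis .
  qed
  ultimately have "((\<Sum>n\<in>S. a n) / W) powr p \<le> (\<Sum>n\<in>S. w n powr (1-p) * a n powr p) / W"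
    by (simp add: sum_divide_distrib)
  hence "(\<Sum>n\<in>S. a n) powr p / W powr p \<le> (\<Sum>n\<in>S. w n powr (1-p) * a n powr p) / W"
    using a W by (simp add: powr_divide sum_nonneg less_imp_le)
  hence "(\<Sum>n\<in>S. a n) powr p \<le> W powr p * ((\<Sum>n\<in>S. w n powr (1-p) * a n powr p) / W)"
    using W by (simp add: divide_le_eq mult.commute)
  also have "\<dots> = W powr (p-1) * (\<Sum>n\<in>S. w n powr (1-p) * a n powr p)"
    using W by (simp add: powr_diff)
  finally show ?thesis unfolding W_def .
qed

lemma jensen_pow:
  fixes a w :: "nat \<Rightarrow> real" and p :: real
  assumes p: "p \<ge> 1" and a: "\<And>n. a n \<ge> 0" and w: "\<And>n. w n > 0"
  shows "(\<Sum>n<N. a n) powr p \<le> (\<Sum>n<N. w n) powr (p-1) * (\<Sum>n<N. w n powr (1-p) * a n powr p)"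
proof -
  define S where "S = {n\<in>{..<N}. a n > 0}"
  have fin: "finite S" unfolding S_def by simp
  have e1: "(\<Sum>n<N. a n) = (\<Sum>n\<in>S. a n)"
    unfolding S_def using a by (intro sum.mono_neutral_right) (auto simp: order.order_iff_strict)
  have e2: "(\<Sum>n<N. w n powr (1-p) * a n powr p) = (\<Sum>n\<in>S. w n powr (1-p) * a n powr p)"
    unfolding S_def using a by (intro sum.mono_neutral_right) (auto simp: order.order_iff_strict)
  show ?thesis
  proof (cases "S = {}")
    case True
    thus ?thesis unfolding e1 e2 by simp
  next
    case False
    have "(\<Sum>n\<in>S. a n) powr p \<le> (\<Sum>n\<in>S. w n) powr (p-1) * (\<Sum>n\<in>S. w n powr (1-p) * a n powr p)"
      using jensen_pos[OF fin False p] w unfolding S_def by auto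
    also have "\<dots> \<le> (\<Sum>n<N. w n) powr (p-1) * (\<Sum>n\<in>S. w n powr (1-p) * a n powr p)"
    proof (intro mult_right_mono powr_mono2)
      show "(\<Sum>n\<in>S. w n) \<le> (\<Sum>n<N. w n)" unfolding S_def using w by (intro sum_mono2) (auto intro: less_imp_le)
      show "0 \<le> (\<Sum>n\<in>S. w n)" using w by (intro sum_nonneg) (auto intro: less_imp_le)
      show "0 \<le> (\<Sum>n\<in>S. w n powr (1-p) * a n powr p)" by (intro sum_nonneg) simp
    qed (use p in auto)
    finally show ?thesis unfolding e1 e2 .
  qed
qed

lemma pow_exp_mono:
  fixes z y a :: real
  assumes "0 < z" "z \<le> y" "y \<le> a"
  shows "z powr a * exp (- z) \<le> y powr a * exp (- y)"
proof -
  have y: "y > 0" using assms by simp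
  have "ln (z / y) \<le> z / y - 1" using assms y by (intro ln_le_minus_one) simp
  hence "ln y - ln z \<ge> (y - z) / y" using assms y by (simp add: ln_div field_simps)
  moreover have "(y - z) / y * a \<ge> y - z"
    using assms y mult_nonneg_nonneg[of "a-y" "y-z"] by (simp add: field_simps algebra_simps)
  moreover have "a \<ge> 0" using assms by simp
  ultimately have "a * (ln y - ln z) \<ge> y - z"
    by (smt (verit) mult.commute mult_right_mono)
  hence "a * ln z - z \<le> a * ln y - y" by (simp add: algebra_simps)
  hence "exp (a * ln z - z) \<le> exp (a * ln y - y)" by simp
  thus ?thesis using assms y by (simp add: powr_def exp_diff exp_minus field_simps)
qed

lemma pow_div_fact_le_exp:
  fixes x :: real assumes "x \<ge> 0"
  shows "x ^ n / fact n \<le> exp x"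
proof -
  have s: "summable (\<lambda>n. x ^ n /\<^sub>R fact n)" by (rule summable_exp_generic)
  have "(\<Sum>m\<in>{n}. x ^ m /\<^sub>R fact m) \<le> (\<Sum>m. x ^ m /\<^sub>R fact m)"
    by (rule sum_le_suminf[OF s]) (use assms in auto)
  thus ?thesis by (simp add: exp_def divide_inverse mult.commute)
qed

lemma summable_n_geom:
  fixes \<rho> :: real assumes "0 \<le> \<rho>" "\<rho> < 1"
  shows "summable (\<lambda>n. real n * \<rho> ^ n)"
proof (rule summable_ratio_test[where c="(1+\<rho>)/2" and N="nat \<lceil>2*\<rho>/(1-\<rho>)\<rceil> + 1"])
  show "(1+\<rho>)/2 < 1" using assms by simp
  fix n assume n: "n \<ge> nat \<lceil>2*\<rho>/(1-\<rho>)\<rceil> + 1"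
  hence "real n \<ge> 2*\<rho>/(1-\<rho>)" by linarith
  hence "real n * (1 - \<rho>) \<ge> 2 * \<rho>" using assms by (simp add: field_simps)
  hence "(real n + 1) * \<rho> \<le> (1+\<rho>)/2 * real n" by (simp add: algebra_simps)
  hence "(real n + 1) * \<rho> * \<rho>^n \<le> (1+\<rho>)/2 * real n * \<rho>^n"
    using assms by (intro mult_right_mono) auto
  thus "norm (real (Suc n) * \<rho> ^ Suc n) \<le> (1+\<rho>)/2 * norm (real n * \<rho> ^ n)"
    using assms by (simp add: algebra_simps)
qed

lemma erl_pos_eq:
  assumes "z > 0" "k \<ge> 1"
  shows "erlang_density (k-1) 1 z * (2/z) powr p
         = 2 powr p / fact (k-1) * (z powr (real k - p - 1) * exp (- z))"
proof -
  have zk: "z ^ (k-1) = z powr (real k - 1)"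
    using powr_realpow[of z "k-1"] assms by (simp add: of_nat_diff)
  have E1: "erlang_density (k-1) 1 z = z powr (real k - 1) * exp (- z) / fact (k-1)"
    using assms zk by (simp add: erlang_density_def)
  have E2: "(2/z) powr p = 2 powr p / z powr p" using assms by (simp add: powr_divide)
  have E3: "z powr (real k - 1) / z powr p = z powr (real k - p - 1)"
    using assms by (simp add: powr_diff[symmetric] algebra_simps)
  have "erlang_density (k-1) 1 z * (2/z) powr p
      = 2 powr p / fact (k-1) * ((z powr (real k - 1) / z powr p) * exp (- z))"
    unfolding E1 E2 by (simp add: field_simps)
  also have "\<dots> = 2 powr p / fact (k-1) * (z powr (real k - p - 1) * exp (- z))"
    unfolding E3 ..
  finally show ?thesis .
qed

lemma T1_finite:
  fixes p :: real and k :: nat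
  assumes "k \<ge> 1" "0 \<le> p" "p < real k"
  shows "(\<integral>\<^sup>+ z. ennreal (erlang_density (k-1) 1 z) * ennreal ((2/z) powr p * indicator {0<..<real k/2} z) \<partial>lborel) < \<infinity>"
proof -
  define C where "C = 2 powr p / fact (k-1)"
  have C: "C \<ge> 0" unfolding C_def by simp
  have le: "ennreal (erlang_density (k-1) 1 z) * ennreal ((2/z) powr p * indicator {0<..<real k/2} z)
     \<le> ennreal C * ennreal (indicator {0..} z * z powr ((real k - p) - 1) / exp z)" for z
  proof (cases "z \<in> {0<..<real k/2}")
    case True
    hence z: "z > 0" by simp
    have "ennreal (erlang_density (k-1) 1 z) * ennreal ((2/z) powr p * indicator {0<..<real k/2} z)
        = ennreal (erlang_density (k-1) 1 z * (2/z) powr p)"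
      using True by (simp add: ennreal_mult[symmetric])
    also have "\<dots> = ennreal (C * (z powr (real k - p - 1) * exp (- z)))"
      unfolding C_def using erl_pos_eq[OF z assms(1)] by simp
    also have "\<dots> = ennreal C * ennreal (indicator {0..} z * z powr ((real k - p) - 1) / exp z)"
      using z C by (simp add: ennreal_mult[symmetric] exp_minus field_simps)
    finally show ?thesis by simp
  next
    case False thus ?thesis by simp
  qed
  have "(\<integral>\<^sup>+ z. ennreal (erlang_density (k-1) 1 z) * ennreal ((2/z) powr p * indicator {0<..<real k/2} z) \<partial>lborel)
     \<le> (\<integral>\<^sup>+ z. ennreal C * ennreal (indicator {0..} z * z powr ((real k - p) - 1) / exp z) \<partial>lborel)"
    by (rule nn_integral_mono) (rule le)
  also have "\<dots> = ennreal C * (\<integral>\<^sup>+ z. ennreal (indicator {0..} z * z powr ((real k - p) - 1) / exp z) \<partial>lborel)"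
    by (rule nn_integral_cmult) measurable
  also have "(\<integral>\<^sup>+ z. ennreal (indicator {0..} z * z powr ((real k - p) - 1) / exp z) \<partial>lborel) = Gamma (real k - p)"
    using Gamma_conv_nn_integral_real[of "real k - p"] assms by simp
  also have "ennreal C * ennreal (Gamma (real k - p)) < \<infinity>" by (simp add: ennreal_mult_less_top)
  finally show ?thesis .
qed

lemma T1_tail:
  fixes p :: real and k :: nat
  assumes "k \<ge> 1" "0 \<le> p" "real k \<ge> 2*p + 2"
  shows "(\<integral>\<^sup>+ z. ennreal (erlang_density (k-1) 1 z) * ennreal ((2/z) powr p * indicator {0<..<real k/2} z) \<partial>lborel)
     \<le> ennreal (2 powr p / fact (k-1) * ((real k/2) powr (real k - p - 1) * exp (- (real k/2))) * (real k/2))"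
proof -
  define C where "C = 2 powr p / fact (k-1) * ((real k/2) powr (real k - p - 1) * exp (- (real k/2)))"
  have C: "C \<ge> 0" unfolding C_def by simp
  have le: "ennreal (erlang_density (k-1) 1 z) * ennreal ((2/z) powr p * indicator {0<..<real k/2} z)
     \<le> ennreal C * indicator {0<..<real k/2} z" for z
  proof (cases "z \<in> {0<..<real k/2}")
    case True
    hence z: "z > 0" "z \<le> real k/2" by auto
    have "ennreal (erlang_density (k-1) 1 z) * ennreal ((2/z) powr p * indicator {0<..<real k/2} z)
        = ennreal (erlang_density (k-1) 1 z * (2/z) powr p)"
      using True by (simp add: ennreal_mult[symmetric])
    also have "\<dots> = ennreal (2 powr p / fact (k-1) * (z powr (real k - p - 1) * exp (- z)))"
      using erl_pos_eq[OF z(1) assms(1)] by simp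
    also have "\<dots> \<le> ennreal C"
      unfolding C_def using z assms
      by (intro ennreal_leI mult_left_mono pow_exp_mono) auto
    finally show ?thesis using True by simp
  next
    case False thus ?thesis by simp
  qed
  have "(\<integral>\<^sup>+ z. ennreal (erlang_density (k-1) 1 z) * ennreal ((2/z) powr p * indicator {0<..<real k/2} z) \<partial>lborel)
     \<le> (\<integral>\<^sup>+ z. ennreal C * indicator {0<..<real k/2} z \<partial>lborel)"
    by (rule nn_integral_mono) (rule le)
  also have "\<dots> = ennreal C * emeasure lborel {0<..<real k/2}"
    by (rule nn_integral_cmult_indicator) simp
  also have "\<dots> = ennreal (C * (real k/2))" using ennreal_mult'[OF C, of "real k/2"] by simp
  finally show ?thesis unfolding C_def .
qed

lemma T1_decay:
  fixes p e :: real and k :: nat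
  assumes k: "k \<ge> 1" and p: "0 \<le> p" and e: "0 \<le> e" "e \<le> 1"
  shows "real k powr (p - 1 + e) * (2 powr p / fact (k-1) * ((real k/2) powr (real k - p - 1) * exp (- (real k/2))) * (real k/2))
         \<le> 4 powr p * (real k * (exp (1/2) / 2) ^ k)"
proof -
  define K where "K = real k"
  have K: "K \<ge> 1" "K > 0" using k by (auto simp: K_def)
  have f: "fact k = K * fact (k-1)" unfolding K_def using k
    using fact_reduce[of k, where ?'a=real] k by simp
  have a1: "(K/2) powr (K-p-1) * (K/2) = (K/2) powr (K-p)"
  proof -
    have "(K/2) powr (K-p-1) * (K/2) = (K/2) powr (K-p-1) * (K/2) powr 1" using K by simp
    also have "\<dots> = (K/2) powr ((K-p-1) + 1)" by (rule powr_add[symmetric])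
    finally show ?thesis by simp
  qed
  have a2: "(K/2) powr (K-p) = K powr (K-p) / 2 powr (K-p)" using K by (simp add: powr_divide)
  have a3: "K powr (p-1+e) * K powr (K-p) = K powr e * K powr K / K"
  proof -
    have "K powr (p-1+e) * K powr (K-p) = K powr ((p-1+e) + (K-p))" by (rule powr_add[symmetric])
    also have "(p-1+e) + (K-p) = (e + K) - 1" by simp
    also have "K powr ((e + K) - 1) = K powr (e + K) / K powr 1" by (rule powr_diff)
    also have "K powr (e + K) = K powr e * K powr K" by (rule powr_add)
    finally show ?thesis using K by simp
  qed
  have a4: "2 powr p / 2 powr (K-p) = 4 powr p / 2 powr K"
  proof -
    have "(4::real) = 2 powr 2" by simp
    hence "(4::real) powr p = (2 powr 2) powr p" by simp
    also have "\<dots> = 2 powr (2*p)" by (rule powr_powr)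
    finally have "(4::real) powr p = 2 powr (2*p)" .
    moreover have "(2::real) powr p / 2 powr (K-p) = 2 powr (p - (K-p))" by (rule powr_diff[symmetric])
    moreover have "(2::real) powr (2*p) / 2 powr K = 2 powr (2*p - K)" by (rule powr_diff[symmetric])
    moreover have "p - (K-p) = 2*p - K" by simp
    ultimately show ?thesis by simp
  qed
  have "K powr (p - 1 + e) * (2 powr p / fact (k-1) * ((K/2) powr (K - p - 1) * exp (- (K/2))) * (K/2))
      = (K powr (p-1+e) * K powr (K-p)) * (2 powr p / 2 powr (K-p)) * exp (- (K/2)) / fact (k-1)"
  proof -
    have "K powr (p - 1 + e) * (2 powr p / fact (k-1) * ((K/2) powr (K - p - 1) * exp (- (K/2))) * (K/2))
       = K powr (p - 1 + e) * 2 powr p * ((K/2) powr (K - p - 1) * (K/2)) * exp (- (K/2)) / fact (k-1)"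
      by (simp only: mult_ac times_divide_eq_right times_divide_eq_left)
    also have "\<dots> = K powr (p - 1 + e) * 2 powr p * (K powr (K-p) / 2 powr (K-p)) * exp (- (K/2)) / fact (k-1)"
      unfolding a1 a2 ..
    also have "\<dots> = (K powr (p-1+e) * K powr (K-p)) * (2 powr p / 2 powr (K-p)) * exp (- (K/2)) / fact (k-1)"
      by (simp only: mult_ac times_divide_eq_right times_divide_eq_left)
    finally show ?thesis .
  qed
  also have "\<dots> = 4 powr p * K powr e * (K powr K / fact k) * (exp (- (K/2)) / 2 powr K)"
    unfolding a3 a4 f using K by (simp add: divide_simps del: powr_gt_zero)
  also have "\<dots> \<le> 4 powr p * K * (exp K * (exp (- (K/2)) / 2 powr K))"
  proof -
    have "K powr e \<le> K powr 1" using K e by (intro powr_mono) auto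
    hence "K powr e \<le> K" using K by simp
    moreover have "K powr K / fact k \<le> exp K"
      using pow_div_fact_le_exp[of K k] K unfolding K_def by (simp add: powr_realpow)
    ultimately have X: "K powr e * (K powr K / fact k) \<le> K * exp K"
      using K by (intro mult_mono) auto
    have Q: "exp (- (K/2)) / 2 powr K \<ge> 0" by simp
    have "4 powr p * K powr e * (K powr K / fact k) * (exp (- (K/2)) / 2 powr K)
        = 4 powr p * (K powr e * (K powr K / fact k)) * (exp (- (K/2)) / 2 powr K)" by (simp only: mult.assoc)
    also have "\<dots> \<le> 4 powr p * (K * exp K) * (exp (- (K/2)) / 2 powr K)"
      using X Q by (intro mult_right_mono mult_left_mono) auto
    also have "\<dots> = 4 powr p * K * (exp K * (exp (- (K/2)) / 2 powr K))" by (simp only: mult.assoc)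
    finally show ?thesis .
  qed
  also have "exp K * (exp (- (K/2)) / 2 powr K) = (exp (1/2) / 2) ^ k"
  proof -
    have "exp K * exp (- (K/2)) = exp (1/2) ^ k" unfolding K_def
      by (simp add: exp_add[symmetric] exp_of_nat_mult[symmetric])
    moreover have "2 powr K = 2 ^ k" unfolding K_def by (simp add: powr_realpow)
    ultimately show ?thesis by (simp add: power_divide)
  qed
  finally show ?thesis unfolding K_def by (simp add: mult.assoc)
qed

lemma Psi_meas[measurable]: "Psi \<in> borel_measurable borel"
  unfolding Psi_def[abs_def] frac_def
  using borel_measurable_real_floor by measurable

locale L = prob_space M for M :: "'a measure" +
  fixes E :: "nat \<Rightarrow> 'a \<Rightarrow> real" and \<gamma> :: real
  assumes indep: "indep_vars (\<lambda>_. borel) E {1..}"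
    and distE: "\<And>i. i \<ge> 1 \<Longrightarrow> distributed M lborel (E i) (exponential_density 1)"
    and gam: "\<gamma> > 0"
begin

definition Z :: "nat \<Rightarrow> 'a \<Rightarrow> real" where "Z k \<omega> = (\<Sum>i\<in>{1..k}. E i \<omega>)"

definition A :: "nat \<Rightarrow> 'a \<Rightarrow> real" where
  "A k \<omega> = \<bar>Psi (Z k \<omega> / \<gamma>) / Z k \<omega> - Psi (real k / \<gamma>) / real k\<bar>"

lemma Z_meas[measurable]: "Z k \<in> borel_measurable M"
proof -
  have "(\<lambda>\<omega>. \<Sum>i\<in>{1..k}. E i \<omega>) \<in> borel_measurable M"
    by (rule borel_measurable_sum) (use distributed_measurable[OF distE] in auto)
  thus ?thesis unfolding Z_def[abs_def] .
qed

lemma A_meas[measurable]: "A k \<in> borel_measurable M"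
  unfolding A_def[abs_def] by measurable

lemma Z_dist: assumes "k \<ge> 1" shows "distributed M lborel (Z k) (erlang_density (k-1) 1)"
proof -
  have "distributed M lborel (\<lambda>x. \<Sum>i\<in>{1..k}. E i x) (erlang_density (card {1..k} - 1) 1)"
    by (rule exponential_distributed_sum) (use assms distE indep_vars_subset[OF indep] in auto)
  thus ?thesis unfolding Z_def[abs_def] by simp
qed

lemma Z_pos: assumes "k \<ge> 1" shows "AE \<omega> in M. Z k \<omega> > 0"
proof -
  have "(AE \<omega> in M. Z k \<omega> > 0) \<longleftrightarrow> (AE x in lborel. 0 < ennreal (erlang_density (k-1) 1 x) \<longrightarrow> x > 0)"
    by (rule distributed_AE2[OF Z_dist[OF assms]]) measurable
  moreover have "AE x in lborel. 0 < ennreal (erlang_density (k-1) 1 x) \<longrightarrow> x > 0"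
    using AE_lborel_singleton[of 0] by eventually_elim (auto simp: erlang_density_def)
  ultimately show ?thesis by simp
qed

lemma Z_sq: assumes "k \<ge> 1"
  shows "(\<integral>\<^sup>+ \<omega>. ennreal ((Z k \<omega> - real k)^2 + real k) \<partial>M) = ennreal (2 * real k)"
proof -
  note D = Z_dist[OF assms]
  have i1: "integrable M (\<lambda>x. Z k x ^ 1)" and i2: "integrable M (\<lambda>x. Z k x ^ 2)"
    by (rule erlang_ith_moment_integrable[OF _ D], simp)+
  have m1: "expectation (\<lambda>x. Z k x ^ 1) = real k" using erlang_ith_moment[OF _ D, of 1] assms
    by (simp add: fact_reduce[of k])
  have m2: "expectation (\<lambda>x. Z k x ^ 2) = real k * (real k + 1)"
  proof -
    have F: "fact (k - 1 + 2) = (fact (k-1) :: real) * (real k * (real k + 1))"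
      using assms by (cases k) (auto simp: algebra_simps)
    have "expectation (\<lambda>x. Z k x ^ 2) = fact (k - 1 + 2) / (fact (k - 1) * 1 ^ 2)"
      by (rule erlang_ith_moment[OF _ D]) simp
    also have "\<dots> = real k * (real k + 1)" unfolding F by simp
    finally show ?thesis .
  qed
  have eq: "(\<lambda>\<omega>. (Z k \<omega> - real k)^2 + real k) = (\<lambda>\<omega>. Z k \<omega> ^ 2 - 2 * real k * Z k \<omega> ^ 1 + (real k ^ 2 + real k))"
    by (rule ext) (simp add: power2_eq_square algebra_simps)
  have int: "integrable M (\<lambda>\<omega>. (Z k \<omega> - real k)^2 + real k)"
    unfolding eq using i1 i2 by auto
  have "(\<integral>\<^sup>+ \<omega>. ennreal ((Z k \<omega> - real k)^2 + real k) \<partial>M) = ennreal (expectation (\<lambda>\<omega>. (Z k \<omega> - real k)^2 + real k))"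
    by (rule nn_integral_eq_integral[OF int]) simp
  also have "expectation (\<lambda>\<omega>. (Z k \<omega> - real k)^2 + real k) = 2 * real k"
    unfolding eq using i1 i2 m1 m2 by (simp add: prob_space power2_eq_square algebra_simps)
  finally show ?thesis .
qed

end

context L begin

definition J0 :: int where "J0 = \<lceil>log 2 (1/(2*\<gamma>))\<rceil>"
definition bd :: "nat \<Rightarrow> real" where "bd i = \<gamma> * 2 powr (real_of_int (J0 + int i))"

lemma bd_cover:
  fixes j :: int assumes "\<gamma> * 2 powr j > 1/2"
  shows "\<exists>i. bd i = \<gamma> * 2 powr j"
proof -
  have "2 powr j > 1/(2*\<gamma>)" using assms gam by (simp add: field_simps)
  hence "log 2 (1/(2*\<gamma>)) < j" using gam by (subst log_less_iff) auto
  hence "J0 \<le> j" unfolding J0_def by (simp add: ceiling_le_iff)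
  hence "j = J0 + int (nat (j - J0))" by simp
  thus ?thesis unfolding bd_def by (intro exI[of _ "nat (j - J0)"]) (metis)
qed

lemma bd_ge: "bd i \<ge> 1/2"
proof -
  have "log 2 (1/(2*\<gamma>)) \<le> real_of_int (J0 + int i)" unfolding J0_def by linarith
  hence "1/(2*\<gamma>) \<le> 2 powr (real_of_int (J0 + int i))" using gam by (subst (asm) log_le_iff) auto
  thus ?thesis unfolding bd_def using gam by (simp add: field_simps)
qed

lemma bd_geom: "bd i = bd 0 * 2 ^ i"
proof -
  have "2 powr (real_of_int (J0 + int i)) = 2 powr (real_of_int J0) * 2 powr (real i)"
    by (simp add: powr_add)
  thus ?thesis unfolding bd_def by (simp add: powr_realpow)
qed

definition ci :: "nat \<Rightarrow> nat \<Rightarrow> real" where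
  "ci k i = (if bd i > real k / 2 then 2 / ((real k - bd i)^2 + real k) else 0)"

lemma ci_nonneg: "k \<ge> 1 \<Longrightarrow> ci k i \<ge> 0"
  unfolding ci_def by (auto simp: add_nonneg_pos)

lemma point_bound:
  fixes z p :: real and k :: nat
  assumes z: "z > 0" and k: "k \<ge> 1" and p: "p \<ge> 0"
  shows "ennreal (\<bar>Psi (z / \<gamma>) / z - Psi (real k / \<gamma>) / real k\<bar> powr p)
     \<le> ennreal ((2/z) powr p * indicator {0<..<real k/2} z)
        + ennreal ((4 / real k) powr p) * ((\<Sum>i. ennreal (ci k i)) * ennreal ((z - real k)^2 + real k))"
proof -
  define h where "h = \<bar>Psi (z / \<gamma>) / z - Psi (real k / \<gamma>) / real k\<bar>"
  have kpos: "real k > 0" using k by simp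
  have h0: "h \<ge> 0" unfolding h_def by simp
  have hb: "h \<le> 2 / min z (real k)" unfolding h_def by (rule term_bound[OF z k gam])
  show ?thesis
  proof (cases "z < real k / 2")
    case True
    have "h \<le> 2 / z" using hb True kpos by (simp add: min_def)
    hence "h powr p \<le> (2/z) powr p" using h0 p by (intro powr_mono2) auto
    hence "ennreal (h powr p) \<le> ennreal ((2/z) powr p * indicator {0<..<real k/2} z)"
      using True z by (simp add: ennreal_leI)
    thus ?thesis unfolding h_def[symmetric] by (rule order_trans) simp
  next
    case False
    show ?thesis
    proof (cases "h = 0")
      case True thus ?thesis unfolding h_def[symmetric] by simp
    next
      case hne: False
      obtain j :: int where j: "min z (real k) < \<gamma> * 2 powr j" "\<gamma> * 2 powr j \<le> max z (real k)"
        using term_zero[OF z k gam] hne unfolding h_def by auto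
      have mk: "min z (real k) \<ge> real k / 2" using False kpos by (simp add: min_def)
      hence "\<gamma> * 2 powr j > 1/2" using j(1) k by simp
      then obtain i where i: "bd i = \<gamma> * 2 powr j" using bd_cover by blast
      have bi: "bd i > real k / 2" using i j mk by simp
      have dist: "(z - real k)^2 \<ge> (real k - bd i)^2"
      proof (cases "z < real k")
        case True
        hence "z < bd i" "bd i \<le> real k" using i j by (auto simp: min_def max_def)
        hence "\<bar>real k - bd i\<bar> \<le> \<bar>z - real k\<bar>" by simp
        thus ?thesis by (simp add: abs_le_square_iff)
      next
        case False
        hence "min z (real k) = real k" "max z (real k) = z" by auto
        hence "real k < bd i" "bd i \<le> z" using i j by auto
        hence "\<bar>real k - bd i\<bar> \<le> \<bar>z - real k\<bar>" by simp
        thus ?thesis by (simp add: abs_le_square_iff)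
      qed
      have one: "ci k i * ((z - real k)^2 + real k) \<ge> 1"
      proof -
        have pos: "(real k - bd i)^2 + real k > 0" using kpos by (simp add: add_nonneg_pos)
        have "ci k i * ((z - real k)^2 + real k) = 2 * (((z - real k)^2 + real k) / ((real k - bd i)^2 + real k))"
          unfolding ci_def using bi by simp
        moreover have "((z - real k)^2 + real k) / ((real k - bd i)^2 + real k) \<ge> 1"
          using dist pos by simp
        ultimately show ?thesis by linarith
      qed
      have "(1::ennreal) \<le> ennreal (ci k i * ((z - real k)^2 + real k))"
        using one by (simp add: ennreal_leI)
      also have "\<dots> = ennreal (ci k i) * ennreal ((z - real k)^2 + real k)"
        using ci_nonneg[OF k] by (simp add: ennreal_mult)
      also have "\<dots> \<le> (\<Sum>i. ennreal (ci k i)) * ennreal ((z - real k)^2 + real k)"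
      proof (intro mult_right_mono)
        show "ennreal (ci k i) \<le> (\<Sum>i. ennreal (ci k i))"
          using sum_le_suminf[OF summableI, of "{i}" "\<lambda>i. ennreal (ci k i)"] by simp
      qed simp
      finally have S1: "1 \<le> (\<Sum>i. ennreal (ci k i)) * ennreal ((z - real k)^2 + real k)" .
      have "h \<le> 2 / min z (real k)" by (rule hb)
      also have "\<dots> \<le> 4 / real k" using mk kpos by (simp add: field_simps)
      finally have "h powr p \<le> (4 / real k) powr p" using h0 p by (intro powr_mono2) auto
      hence "ennreal (h powr p) \<le> ennreal ((4 / real k) powr p) * 1" by (simp add: ennreal_leI)
      also have "\<dots> \<le> ennreal ((4 / real k) powr p) * ((\<Sum>i. ennreal (ci k i)) * ennreal ((z - real k)^2 + real k))"
        by (intro mult_left_mono S1) simp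
      finally show ?thesis unfolding h_def[symmetric] by (rule order_trans) simp
    qed
  qed
qed

end

context L begin

definition T1 :: "nat \<Rightarrow> real \<Rightarrow> ennreal" where
  "T1 k p = (\<integral>\<^sup>+ z. ennreal (erlang_density (k-1) 1 z) * ennreal ((2/z) powr p * indicator {0<..<real k/2} z) \<partial>lborel)"

lemma int_bound:
  assumes k: "k \<ge> 1" and p: "p \<ge> 0"
  shows "(\<integral>\<^sup>+ \<omega>. ennreal (A k \<omega> powr p) \<partial>M)
     \<le> T1 k p + ennreal ((4 / real k) powr p) * ((\<Sum>i. ennreal (ci k i)) * ennreal (2 * real k))"
proof -
  define S where "S = (\<Sum>i. ennreal (ci k i))"
  define c where "c = ennreal ((4 / real k) powr p)"
  have "(\<integral>\<^sup>+ \<omega>. ennreal (A k \<omega> powr p) \<partial>M)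
     \<le> (\<integral>\<^sup>+ \<omega>. ennreal ((2 / Z k \<omega>) powr p * indicator {0<..<real k/2} (Z k \<omega>))
           + c * (S * ennreal ((Z k \<omega> - real k)^2 + real k)) \<partial>M)"
  proof (rule nn_integral_mono_AE)
    show "AE \<omega> in M. ennreal (A k \<omega> powr p) \<le> ennreal ((2 / Z k \<omega>) powr p * indicator {0<..<real k/2} (Z k \<omega>))
           + c * (S * ennreal ((Z k \<omega> - real k)^2 + real k))"
      using Z_pos[OF k] proof eventually_elim
      case (elim \<omega>)
      show ?case unfolding A_def S_def c_def by (rule point_bound[OF elim k p])
    qed
  qed
  also have "\<dots> = (\<integral>\<^sup>+ \<omega>. ennreal ((2 / Z k \<omega>) powr p * indicator {0<..<real k/2} (Z k \<omega>)) \<partial>M)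
           + (\<integral>\<^sup>+ \<omega>. c * (S * ennreal ((Z k \<omega> - real k)^2 + real k)) \<partial>M)"
    by (rule nn_integral_add) measurable
  also have "(\<integral>\<^sup>+ \<omega>. ennreal ((2 / Z k \<omega>) powr p * indicator {0<..<real k/2} (Z k \<omega>)) \<partial>M) = T1 k p"
    unfolding T1_def
    by (rule distributed_nn_integral[OF Z_dist[OF k], symmetric]) measurable
  also have "(\<integral>\<^sup>+ \<omega>. c * (S * ennreal ((Z k \<omega> - real k)^2 + real k)) \<partial>M)
     = c * (S * (\<integral>\<^sup>+ \<omega>. ennreal ((Z k \<omega> - real k)^2 + real k) \<partial>M))"
    by (simp add: nn_integral_cmult)
  also have "(\<integral>\<^sup>+ \<omega>. ennreal ((Z k \<omega> - real k)^2 + real k) \<partial>M) = ennreal (2 * real k)"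
    by (rule Z_sq[OF k])
  finally show ?thesis unfolding S_def c_def .
qed

end

lemma ennreal_suminf_swap:
  fixes G :: "nat \<Rightarrow> nat \<Rightarrow> ennreal"
  shows "(\<Sum>n. \<Sum>i. G n i) = (\<Sum>i. \<Sum>n. G n i)"
proof -
  have "(\<Sum>n. \<Sum>i. G n i) = (\<integral>\<^sup>+ n. (\<Sum>i. G n i) \<partial>count_space UNIV)"
    by (rule nn_integral_count_space_nat[symmetric])
  also have "\<dots> = (\<Sum>i. \<integral>\<^sup>+ n. G n i \<partial>count_space UNIV)"
    by (rule nn_integral_suminf) simp
  also have "\<dots> = (\<Sum>i. \<Sum>n. G n i)" by (simp add: nn_integral_count_space_nat)
  finally show ?thesis .
qed

context L begin

lemma inner_sum_bound:
  fixes e c :: real and K :: nat and i :: nat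
  assumes K: "K \<ge> 1" and e: "0 \<le> e" "e \<le> 1/4" and c: "c \<ge> 0"
  shows "(\<Sum>n. ennreal (c * (if bd i > real (n+K) / 2 then real (n+K) powr e / ((real (n+K) - bd i)^2 + real (n+K)) else 0)))
      \<le> ennreal (c * (120 * bd i powr (-1/4)))"
proof -
  define b where "b = bd i"
  have b: "b \<ge> 1/2" unfolding b_def by (rule bd_ge)
  define gg where "gg k = (if 1 \<le> k \<and> real k < 2*b then real k powr e / ((real k - b)^2 + real k) else 0)" for k :: nat
  have gg0: "gg k \<ge> 0" for k unfolding gg_def by (auto simp: add_nonneg_pos)
  have eqg: "(if bd i > real (n+K) / 2 then real (n+K) powr e / ((real (n+K) - bd i)^2 + real (n+K)) else 0) = gg (n+K)" for n
    unfolding gg_def b_def using K by auto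
  define N where "N = nat \<lceil>2*b\<rceil>"
  have z: "gg (n+K) = 0" if "n \<notin> {..<N}" for n
  proof -
    have "real n \<ge> 2*b" using that unfolding N_def by (simp add: not_less)
    thus ?thesis unfolding gg_def by auto
  qed
  have "(\<Sum>n. ennreal (c * (if bd i > real (n+K) / 2 then real (n+K) powr e / ((real (n+K) - bd i)^2 + real (n+K)) else 0)))
      = (\<Sum>n. ennreal (c * gg (n+K)))" unfolding eqg ..
  also have "\<dots> = (\<Sum>n\<in>{..<N}. ennreal (c * gg (n+K)))"
    by (rule suminf_finite) (use z in auto)
  also have "\<dots> = ennreal (c * (\<Sum>n<N. gg (n+K)))"
    using c gg0 by (simp add: sum_distrib_left)
  also have "(\<Sum>n<N. gg (n+K)) \<le> (\<Sum>m<N+K. gg m)"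
  proof -
    have "(\<Sum>n<N. gg (n+K)) = (\<Sum>m\<in>{K..<N+K}. gg m)"
      using sum.shift_bounds_nat_ivl[of gg 0 K N] by (simp add: atLeast0LessThan)
    also have "\<dots> \<le> (\<Sum>m<N+K. gg m)" using gg0 by (intro sum_mono2) auto
    finally show ?thesis .
  qed
  hence "ennreal (c * (\<Sum>n<N. gg (n+K))) \<le> ennreal (c * (\<Sum>m<N+K. gg m))"
    using c by (intro ennreal_leI mult_left_mono)
  also have "(\<Sum>m<N+K. gg m) \<le> 120 * b powr (-1/4)"
    unfolding gg_def by (rule ksum_bound[OF b e])
  hence "ennreal (c * (\<Sum>m<N+K. gg m)) \<le> ennreal (c * (120 * b powr (-1/4)))"
    using c by (intro ennreal_leI mult_left_mono)
  finally show ?thesis unfolding b_def .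
qed

lemma summable_bd: "summable (\<lambda>i. bd i powr (-1/4))"
proof -
  have b0: "bd 0 > 0" using bd_ge[of 0] by simp
  have eq: "bd i powr (-1/4) = bd 0 powr (-1/4) * (2 powr (-1/4)) ^ i" for i
  proof -
    have e1: "bd i powr (-1/4) = bd 0 powr (-1/4) * (2 ^ i) powr (-1/4)"
      using b0 bd_geom[of i] powr_mult[of "bd 0" "2^i" "-1/4"] by simp
    have e2: "((2::real) ^ i) powr (-1/4) = (2 powr (-1/4)) ^ i"
    proof -
      have "((2::real) ^ i) = 2 powr real i" by (simp add: powr_realpow)
      hence "((2::real) ^ i) powr (-1/4) = 2 powr (real i * (-1/4))" by (simp add: powr_powr)
      also have "real i * (-1/4) = (-1/4) * real i" by simp
      also have "(2::real) powr ((-1/4) * real i) = (2 powr (-1/4)) powr real i" by (rule powr_powr[symmetric])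
      also have "\<dots> = (2 powr (-1/4)) ^ i" by (rule powr_realpow) simp
      finally show ?thesis .
    qed
    show ?thesis using e1 e2 by simp
  qed
  have r: "(2::real) powr (-1/4) < 1" by (simp add: powr_less_one)
  have "summable (\<lambda>i. bd 0 powr (-1/4) * (2 powr (-1/4)) ^ i)"
    by (intro summable_mult summable_geometric) (use r in simp)
  moreover have "(\<lambda>i. bd i powr (-1/4)) = (\<lambda>i. bd 0 powr (-1/4) * (2 powr (-1/4)) ^ i)"
    by (rule ext) (rule eq)
  ultimately show ?thesis by simp
qed
end

lemma exp_half_lt2: "exp (1/2::real) < 2"
proof (rule ccontr)
  assume "\<not> exp (1/2::real) < 2"
  hence h: "exp (1/2::real) \<ge> 2" by simp
  have "exp (1/2::real) * exp (1/2) = exp 1" by (simp add: exp_add[symmetric])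
  moreover have "exp (1/2::real) * exp (1/2) \<ge> 2 * 2" using h by (intro mult_mono) auto
  ultimately show False using exp_le by simp
qed

context L begin

lemma X_finite:
  fixes K :: nat and p :: real
  assumes K: "K \<ge> 1" and p: "1 \<le> p" "p < real K"
  shows "(\<Sum>n. ennreal (real (n+K) powr (p - 1 + (p-1)/(4*p))) * T1 (n+K) p) < \<infinity>"
proof -
  define e where "e = (p-1)/(4*p)"
  have e: "0 \<le> e" "e \<le> 1" using p by (auto simp: e_def field_simps)
  define x where "x n = ennreal (real (n+K) powr (p - 1 + e)) * T1 (n+K) p" for n
  have xfin: "x n < \<infinity>" for n
  proof -
    have "T1 (n+K) p < \<infinity>" unfolding T1_def using K p by (intro T1_finite) auto
    thus ?thesis unfolding x_def by (simp add: ennreal_mult_less_top)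
  qed
  define y where "y n = enn2real (x n)" for n
  have xy: "x n = ennreal (y n)" for n unfolding y_def using xfin[of n] by simp
  have y0: "y n \<ge> 0" for n unfolding y_def by simp
  define \<rho> :: real where "\<rho> = exp (1/2) / 2"
  have \<rho>: "0 \<le> \<rho>" "\<rho> < 1" unfolding \<rho>_def using exp_half_lt2 by auto
  define g where "g n = 4 powr p * (real (n+K) * \<rho> ^ (n+K))" for n
  have sg: "summable g"
  proof -
    have "summable (\<lambda>n. real (n+K) * \<rho> ^ (n+K))"
      using summable_n_geom[OF \<rho>] summable_iff_shift[of "\<lambda>m. real m * \<rho> ^ m" K] by simp
    thus ?thesis unfolding g_def by (rule summable_mult)
  qed
  have ev: "eventually (\<lambda>n. norm (y n) \<le> g n) sequentially"
    using eventually_ge_at_top[of "nat \<lceil>2*p+2\<rceil>"]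
  proof eventually_elim
    case (elim n)
    define k where "k = n + K"
    have k1: "k \<ge> 1" unfolding k_def using K by simp
    have kb: "real k \<ge> 2*p+2" using elim unfolding k_def by linarith
    have "x n \<le> ennreal (real k powr (p - 1 + e)) * ennreal (2 powr p / fact (k-1) * ((real k/2) powr (real k - p - 1) * exp (- (real k/2))) * (real k/2))"
      unfolding x_def T1_def k_def[symmetric] using k1 p kb by (intro mult_left_mono T1_tail) auto
    also have "\<dots> = ennreal (real k powr (p - 1 + e) * (2 powr p / fact (k-1) * ((real k/2) powr (real k - p - 1) * exp (- (real k/2))) * (real k/2)))"
      by (rule ennreal_mult'[symmetric]) simp
    also have "\<dots> \<le> ennreal (g n)"
      unfolding g_def k_def[symmetric] \<rho>_def using T1_decay[OF k1 _ e, of p] p by (intro ennreal_leI) auto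
    finally have "x n \<le> ennreal (g n)" .
    hence "y n \<le> g n" unfolding y_def using enn2real_mono[of "x n" "ennreal (g n)"]
      by (simp add: g_def \<rho>)
    thus ?case using y0[of n] by simp
  qed
  have sy: "summable y" by (rule summable_comparison_test_ev[OF ev sg])
  have "(\<Sum>n. x n) = ennreal (\<Sum>n. y n)" unfolding xy by (rule suminf_ennreal2[OF y0 sy])
  thus ?thesis unfolding x_def e_def by simp
qed

end

context L begin

lemma Y_finite:
  fixes K :: nat and p :: real
  assumes K: "K \<ge> 1" and p: "1 \<le> p" "p < real K"
  shows "(\<Sum>n. ennreal (real (n+K) powr (p - 1 + (p-1)/(4*p))) *
      (ennreal ((4 / real (n+K)) powr p) * ((\<Sum>i. ennreal (ci (n+K) i)) * ennreal (2 * real (n+K))))) < \<infinity>"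
proof -
  define e where "e = (p-1)/(4*p)"
  have e: "0 \<le> e" "e \<le> 1/4" using p by (auto simp: e_def field_simps)
  define C where "C = 4 powr p * 4"
  have C: "C \<ge> 0" unfolding C_def by simp
  define G where "G n i = (if bd i > real (n+K) / 2 then real (n+K) powr e / ((real (n+K) - bd i)^2 + real (n+K)) else 0)" for n i
  have real_eq: "real (n+K) powr (p - 1 + e) * (4 / real (n+K)) powr p * ci (n+K) i * (2 * real (n+K)) = C * G n i" for n i
  proof (cases "bd i > real (n+K) / 2")
    case False thus ?thesis unfolding ci_def G_def by simp
  next
    case True
    define k where "k = real (n+K)"
    have k: "k > 0" unfolding k_def using K by simp
    have D: "(k - bd i)^2 + k > 0" using k by (simp add: add_nonneg_pos)
    have "(4 / k) powr p = 4 powr p / k powr p" using k by (simp add: powr_divide)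
    moreover have "k powr (p - 1 + e) * k / k powr p = k powr e"
    proof -
      have "k powr (p - 1 + e) * k = k powr (p - 1 + e) * k powr 1" using k by simp
      also have "\<dots> = k powr (p - 1 + e + 1)" by (rule powr_add[symmetric])
      finally have "k powr (p - 1 + e) * k / k powr p = k powr (p - 1 + e + 1) / k powr p" by simp
      also have "\<dots> = k powr ((p - 1 + e + 1) - p)" by (rule powr_diff[symmetric])
      finally show ?thesis by simp
    qed
    ultimately have "k powr (p - 1 + e) * (4 / k) powr p * (2 / ((k - bd i)^2 + k)) * (2 * k)
        = 4 powr p * 4 * ((k powr (p - 1 + e) * k / k powr p) / ((k - bd i)^2 + k))"
    proof -
      have gen: "P * (R/Q) * (2/Dd) * (2*k) = R*4*((P*k/Q)/Dd)" if "Q > 0" "Dd > 0" for P Q R Dd :: real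
        using that by (simp add: field_simps)
      show ?thesis unfolding \<open>(4 / k) powr p = 4 powr p / k powr p\<close>
        by (rule gen) (use k D in auto)
    qed
    also have "\<dots> = C * (k powr e / ((k - bd i)^2 + k))"
      unfolding C_def \<open>k powr (p - 1 + e) * k / k powr p = k powr e\<close> ..
    finally show ?thesis using True unfolding ci_def G_def k_def by simp
  qed
  have term_eq: "ennreal (real (n+K) powr (p - 1 + e)) *
      (ennreal ((4 / real (n+K)) powr p) * ((\<Sum>i. ennreal (ci (n+K) i)) * ennreal (2 * real (n+K))))
      = (\<Sum>i. ennreal (C * G n i))" for n
  proof -
    have ci0: "\<And>i. ci (n+K) i \<ge> 0" using K by (intro ci_nonneg) simp
    have "(\<Sum>i. ennreal (C * G n i)) = (\<Sum>i. ennreal (real (n+K) powr (p - 1 + e) * (4 / real (n+K)) powr p) * ennreal (ci (n+K) i) * ennreal (2 * real (n+K)))"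
    proof (intro suminf_cong)
      fix i
      have gen: "ennreal (a*b*c) = ennreal a * ennreal b * ennreal c" if "0 \<le> a" "0 \<le> b" "0 \<le> c" for a b c :: real
        using that by (simp add: ennreal_mult)
      show "ennreal (C * G n i) = ennreal (real (n+K) powr (p - 1 + e) * (4 / real (n+K)) powr p) * ennreal (ci (n+K) i) * ennreal (2 * real (n+K))"
        unfolding real_eq[symmetric] by (rule gen) (use ci0 in auto)
    qed
    also have "\<dots> = ennreal (real (n+K) powr (p - 1 + e) * (4 / real (n+K)) powr p) * (\<Sum>i. ennreal (ci (n+K) i)) * ennreal (2 * real (n+K))"
      by simp
    also have "\<dots> = ennreal (real (n+K) powr (p - 1 + e)) *
      (ennreal ((4 / real (n+K)) powr p) * ((\<Sum>i. ennreal (ci (n+K) i)) * ennreal (2 * real (n+K))))"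
      by (simp add: ennreal_mult' mult.assoc)
    finally show ?thesis by simp
  qed
  have "(\<Sum>n. ennreal (real (n+K) powr (p - 1 + e)) *
      (ennreal ((4 / real (n+K)) powr p) * ((\<Sum>i. ennreal (ci (n+K) i)) * ennreal (2 * real (n+K)))))
      = (\<Sum>n. \<Sum>i. ennreal (C * G n i))" unfolding term_eq ..
  also have "\<dots> = (\<Sum>i. \<Sum>n. ennreal (C * G n i))" by (rule ennreal_suminf_swap)
  also have "\<dots> \<le> (\<Sum>i. ennreal (C * (120 * bd i powr (-1/4))))"
    by (intro suminf_le summableI) (unfold G_def, rule inner_sum_bound[OF K e C])
  also have "\<dots> = ennreal (\<Sum>i. C * (120 * bd i powr (-1/4)))"
    using C by (intro suminf_ennreal2 summable_mult summable_bd) auto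
  also have "\<dots> < \<infinity>" by simp
  finally show ?thesis unfolding e_def .
qed

lemma weighted_finite:
  fixes K :: nat and p :: real
  assumes K: "K \<ge> 1" and p: "1 \<le> p" "p < real K"
  shows "(\<Sum>n. ennreal (real (n+K) powr (p - 1 + (p-1)/(4*p))) * (\<integral>\<^sup>+ \<omega>. ennreal (A (n+K) \<omega> powr p) \<partial>M)) < \<infinity>"
proof -
  define u where "u n = ennreal (real (n+K) powr (p - 1 + (p-1)/(4*p)))" for n
  define X where "X n = u n * T1 (n+K) p" for n
  define Y where "Y n = u n * (ennreal ((4 / real (n+K)) powr p) * ((\<Sum>i. ennreal (ci (n+K) i)) * ennreal (2 * real (n+K))))" for n
  have "(\<Sum>n. u n * (\<integral>\<^sup>+ \<omega>. ennreal (A (n+K) \<omega> powr p) \<partial>M)) \<le> (\<Sum>n. X n + Y n)"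
  proof (intro suminf_le summableI)
    fix n
    have "u n * (\<integral>\<^sup>+ \<omega>. ennreal (A (n+K) \<omega> powr p) \<partial>M)
       \<le> u n * (T1 (n+K) p + ennreal ((4 / real (n+K)) powr p) * ((\<Sum>i. ennreal (ci (n+K) i)) * ennreal (2 * real (n+K))))"
      using K p by (intro mult_left_mono int_bound) auto
    thus "u n * (\<integral>\<^sup>+ \<omega>. ennreal (A (n+K) \<omega> powr p) \<partial>M) \<le> X n + Y n"
      unfolding X_def Y_def by (simp add: distrib_left)
  qed
  also have "\<dots> = (\<Sum>n. X n) + (\<Sum>n. Y n)" by (rule suminf_add[symmetric]) auto
  also have "\<dots> < \<infinity>"
    using X_finite[OF K p] Y_finite[OF K p] unfolding X_def Y_def u_def by simp
  finally show ?thesis unfolding u_def .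
qed

end

context L begin

lemma main_bound:
  fixes K :: nat and p :: real
  assumes K: "K \<ge> 1" and p: "1 \<le> p" "p < real K"
  obtains R where "R \<in> borel_measurable M" "(\<integral>\<^sup>+ \<omega>. R \<omega> \<partial>M) < \<infinity>"
    "AE \<omega> in M. summable (\<lambda>n. A (n+K) \<omega>) \<and> ennreal ((\<Sum>n. A (n+K) \<omega>) powr p) \<le> R \<omega>"
proof -
  define \<alpha> where "\<alpha> = p - 1 + (p-1)/(4*p)"
  define u where "u n = real (n+K) powr \<alpha>" for n
  define w where "w n = real (n+K) powr (-(1 + 1/(4*p)))" for n
  have u0: "u n \<ge> 0" for n unfolding u_def by simp
  have wpos: "w n > 0" for n unfolding w_def using K by simp
  have wu: "w n powr (1-p) = u n" for n
  proof -
    have "w n powr (1-p) = real (n+K) powr (-(1 + 1/(4*p)) * (1-p))" unfolding w_def by (rule powr_powr)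
    also have "-(1 + 1/(4*p)) * (1-p) = \<alpha>" unfolding \<alpha>_def using p by (simp add: field_simps)
    finally show ?thesis unfolding u_def .
  qed
  have sw: "summable w"
  proof -
    have "-(1 + 1/(4*p)) < -1" using p by simp
    hence "summable (\<lambda>n. real n powr (-(1 + 1/(4*p))))" by (simp add: summable_real_powr_iff)
    thus ?thesis unfolding w_def using summable_iff_shift[of "\<lambda>n. real n powr (-(1 + 1/(4*p)))" K] by simp
  qed
  define W where "W = (\<Sum>n. w n)"
  have W0: "W \<ge> 0" unfolding W_def using sw wpos by (intro suminf_nonneg) (auto intro: less_imp_le)
  define R0 where "R0 \<omega> = (\<Sum>n. ennreal (u n * A (n+K) \<omega> powr p))" for \<omega>
  define R where "R \<omega> = ennreal (W powr (p-1)) * R0 \<omega>" for \<omega>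
  have R0m: "R0 \<in> borel_measurable M" unfolding R0_def by measurable
  have Rm: "R \<in> borel_measurable M" unfolding R_def using R0m by measurable
  have intR0: "(\<integral>\<^sup>+ \<omega>. R0 \<omega> \<partial>M) = (\<Sum>n. ennreal (u n) * (\<integral>\<^sup>+ \<omega>. ennreal (A (n+K) \<omega> powr p) \<partial>M))"
  proof -
    have "(\<integral>\<^sup>+ \<omega>. R0 \<omega> \<partial>M) = (\<Sum>n. \<integral>\<^sup>+ \<omega>. ennreal (u n * A (n+K) \<omega> powr p) \<partial>M)"
      unfolding R0_def by (rule nn_integral_suminf) measurable
    also have "\<dots> = (\<Sum>n. ennreal (u n) * (\<integral>\<^sup>+ \<omega>. ennreal (A (n+K) \<omega> powr p) \<partial>M))"
      using u0 by (intro suminf_cong) (simp add: ennreal_mult' nn_integral_cmult)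
    finally show ?thesis .
  qed
  have finR0: "(\<integral>\<^sup>+ \<omega>. R0 \<omega> \<partial>M) < \<infinity>"
    unfolding intR0 u_def \<alpha>_def by (rule weighted_finite[OF K p])
  have finR: "(\<integral>\<^sup>+ \<omega>. R \<omega> \<partial>M) < \<infinity>"
    unfolding R_def using finR0 R0m by (simp add: nn_integral_cmult ennreal_mult_less_top)
  have AEfin: "AE \<omega> in M. R0 \<omega> \<noteq> \<infinity>"
    by (rule nn_integral_PInf_AE[OF R0m]) (use finR0 in simp)
  have "AE \<omega> in M. summable (\<lambda>n. A (n+K) \<omega>) \<and> ennreal ((\<Sum>n. A (n+K) \<omega>) powr p) \<le> R \<omega>"
    using AEfin
  proof eventually_elim
    case (elim \<omega>)
    define a where "a n = A (n+K) \<omega>" for n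
    have a0: "a n \<ge> 0" for n unfolding a_def A_def by simp
    define v where "v n = u n * a n powr p" for n
    have v0: "v n \<ge> 0" for n unfolding v_def using u0 by simp
    have sv: "summable v"
      by (rule summable_suminf_not_top[OF v0]) (use elim in \<open>simp add: R0_def v_def a_def\<close>)
    define B where "B = (\<Sum>n. v n)"
    have veq: "v = (\<lambda>n. u n * A (n+K) \<omega> powr p)" by (rule ext) (simp add: v_def a_def)
    have R0B: "R0 \<omega> = ennreal B" unfolding R0_def B_def
      using suminf_ennreal2[OF v0 sv] unfolding veq .
    have B0: "B \<ge> 0" unfolding B_def using sv v0 by (rule suminf_nonneg)
    define T where "T = W powr (p-1) * B"
    have T0: "T \<ge> 0" unfolding T_def using B0 by simp
    have partial: "(\<Sum>n<N. a n) powr p \<le> T" for N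
    proof -
      have "(\<Sum>n<N. a n) powr p \<le> (\<Sum>n<N. w n) powr (p-1) * (\<Sum>n<N. w n powr (1-p) * a n powr p)"
        by (rule jensen_pow[OF p(1) a0 wpos])
      also have "\<dots> \<le> W powr (p-1) * B"
      proof (intro mult_mono powr_mono2)
        show "(\<Sum>n<N. w n) \<le> W" unfolding W_def using sw wpos by (intro sum_le_suminf) (auto intro: less_imp_le)
        show "(\<Sum>n<N. w n powr (1-p) * a n powr p) \<le> B"
        proof -
          have "(\<Sum>n<N. w n powr (1-p) * a n powr p) = (\<Sum>n<N. v n)" unfolding wu v_def ..
          also have "\<dots> \<le> B" unfolding B_def using sv v0 by (intro sum_le_suminf) auto
          finally show ?thesis .
        qed
        show "0 \<le> (\<Sum>n<N. w n)" using wpos by (intro sum_nonneg) (auto intro: less_imp_le)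
        show "0 \<le> (\<Sum>n<N. w n powr (1-p) * a n powr p)" by (intro sum_nonneg) simp
      qed (use p B0 in auto)
      finally show ?thesis unfolding T_def .
    qed
    have pb: "(\<Sum>n<N. a n) \<le> T powr (1/p)" for N
    proof -
      have s0: "(\<Sum>n<N. a n) \<ge> 0" using a0 by (intro sum_nonneg) auto
      have "(\<Sum>n<N. a n) = ((\<Sum>n<N. a n) powr p) powr (1/p)" using p s0 by (simp add: powr_powr)
      also have "\<dots> \<le> T powr (1/p)" using partial[of N] p by (intro powr_mono2) auto
      finally show ?thesis .
    qed
    have sa: "summable a" by (rule summableI_nonneg_bounded[OF a0 pb])
    have "(\<Sum>n. a n) \<le> T powr (1/p)" by (rule suminf_le_const[OF sa pb])
    moreover have "(\<Sum>n. a n) \<ge> 0" using sa a0 by (rule suminf_nonneg)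
    ultimately have "(\<Sum>n. a n) powr p \<le> (T powr (1/p)) powr p" using p by (intro powr_mono2) auto
    also have "\<dots> = T" using p T0 by (simp add: powr_powr)
    finally have "ennreal ((\<Sum>n. a n) powr p) \<le> ennreal T" by (rule ennreal_leI)
    also have "ennreal T = R \<omega>" unfolding R_def R0B T_def using B0 by (simp add: ennreal_mult)
    finally show ?case using sa unfolding a_def by simp
  qed
  thus ?thesis using that Rm finR by blast
qed

end

theorem lemma2:
  fixes M :: "'a measure" and E :: "nat \<Rightarrow> 'a \<Rightarrow> real"
    and r :: nat and \<gamma> :: real
  assumes "prob_space M"
    and "prob_space.indep_vars M (\<lambda>_. borel) E {1..}"
    and "\<And>i. i \<ge> 1 \<Longrightarrow> distributed M lborel (E i) (exponential_density 1)"
    and "\<gamma> > 0"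
  defines "Z \<equiv> (\<lambda>k \<omega>. \<Sum>i\<in>{1..k}. E i \<omega>)"
  defines "Y \<equiv> (\<lambda>\<omega>. \<Sum>j. Psi (Z (j + r + 1) \<omega> / \<gamma>) / Z (j + r + 1) \<omega>
                         - Psi (real (j + r + 1) / \<gamma>) / real (j + r + 1))"
  shows "(AE \<omega> in M. summable (\<lambda>j. \<bar>Psi (Z (j + r + 1) \<omega> / \<gamma>) / Z (j + r + 1) \<omega>
                         - Psi (real (j + r + 1) / \<gamma>) / real (j + r + 1)\<bar>))
       \<and> (\<forall>p::real. 1 \<le> p \<and> p < real r + 1 \<longrightarrow> integrable M (\<lambda>\<omega>. \<bar>Y \<omega>\<bar> powr p))"
proof -
  interpret I: L M E \<gamma>
    by (intro L.intro L_axioms.intro assms(1)) (use assms(1) assms(2-4) in \<open>auto simp: prob_space.indep_vars_def\<close>)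
  have ZZ: "Z = I.Z" unfolding Z_def by (intro ext) (simp add: I.Z_def)
  define t where "t j \<omega> = Psi (Z (j + r + 1) \<omega> / \<gamma>) / Z (j + r + 1) \<omega> - Psi (real (j + r + 1) / \<gamma>) / real (j + r + 1)" for j \<omega>
  have tA: "\<bar>t j \<omega>\<bar> = I.A (j + r + 1) \<omega>" for j \<omega> unfolding t_def I.A_def ZZ ..
  have Yt: "Y \<omega> = (\<Sum>j. t j \<omega>)" for \<omega> unfolding Y_def t_def ..
  have part1: "AE \<omega> in M. summable (\<lambda>j. \<bar>t j \<omega>\<bar>)"
  proof -
    obtain R where "R \<in> borel_measurable M" "(\<integral>\<^sup>+ \<omega>. R \<omega> \<partial>M) < \<infinity>"
      and AE1: "AE \<omega> in M. summable (\<lambda>n. I.A (n + (r+2)) \<omega>) \<and> ennreal ((\<Sum>n. I.A (n + (r+2)) \<omega>) powr 1) \<le> R \<omega>"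
      by (rule I.main_bound[of "r+2" 1]) auto
    from AE1 show ?thesis
    proof eventually_elim
      case (elim \<omega>)
      have "summable (\<lambda>n. I.A (Suc n + r + 1) \<omega>)" using elim by (simp add: add.assoc)
      hence "summable (\<lambda>n. I.A (n + r + 1) \<omega>)" by (rule summable_Suc_iff[THEN iffD1])
      thus ?case unfolding tA .
    qed
  qed
  have part2: "integrable M (\<lambda>\<omega>. \<bar>Y \<omega>\<bar> powr p)" if p: "1 \<le> p" "p < real r + 1" for p :: real
  proof -
    obtain R where Rm: "R \<in> borel_measurable M" and Rf: "(\<integral>\<^sup>+ \<omega>. R \<omega> \<partial>M) < \<infinity>"
      and AEb: "AE \<omega> in M. summable (\<lambda>n. I.A (n + (r+1)) \<omega>) \<and> ennreal ((\<Sum>n. I.A (n + (r+1)) \<omega>) powr p) \<le> R \<omega>"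
      by (rule I.main_bound[of "r+1" p]) (use p in auto)
    have tm[measurable]: "t j \<in> borel_measurable M" for j unfolding t_def ZZ by measurable
    have Ym: "Y \<in> borel_measurable M" unfolding Yt[abs_def] by measurable
    show ?thesis
    proof (rule integrableI_bounded)
      show "(\<lambda>\<omega>. \<bar>Y \<omega>\<bar> powr p) \<in> borel_measurable M" using Ym by measurable
      have "(\<integral>\<^sup>+ \<omega>. ennreal (norm (\<bar>Y \<omega>\<bar> powr p)) \<partial>M) \<le> (\<integral>\<^sup>+ \<omega>. R \<omega> \<partial>M)"
      proof (rule nn_integral_mono_AE)
        show "AE \<omega> in M. ennreal (norm (\<bar>Y \<omega>\<bar> powr p)) \<le> R \<omega>"
          using AEb
        proof eventually_elim
          case (elim \<omega>)
          have s: "summable (\<lambda>j. \<bar>t j \<omega>\<bar>)" using elim unfolding tA by (simp add: add.assoc)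
          have "\<bar>Y \<omega>\<bar> \<le> (\<Sum>j. \<bar>t j \<omega>\<bar>)" unfolding Yt by (rule summable_rabs[OF s])
          also have "(\<Sum>j. \<bar>t j \<omega>\<bar>) = (\<Sum>n. I.A (n + (r+1)) \<omega>)" unfolding tA by (simp add: add.assoc)
          finally have "\<bar>Y \<omega>\<bar> powr p \<le> (\<Sum>n. I.A (n + (r+1)) \<omega>) powr p" using p by (intro powr_mono2) auto
          hence "ennreal (norm (\<bar>Y \<omega>\<bar> powr p)) \<le> ennreal ((\<Sum>n. I.A (n + (r+1)) \<omega>) powr p)"
            by (simp add: ennreal_leI)
          also have "\<dots> \<le> R \<omega>" using elim by simp
          finally show ?case .
        qed
      qed
      also have "\<dots> < \<infinity>" by (rule Rf)
      finally show "(\<integral>\<^sup>+ \<omega>. ennreal (norm (\<bar>Y \<omega>\<bar> powr p)) \<partial>M) < \<infinity>" .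
    qed
  qed
  show ?thesis using part1 part2 unfolding t_def by auto
qed

end
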